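(* Let $\Theta=\{\sigma_1,\dots,\sigma_q\}$ be a regular set of pairwise commuting Pauli operators on $k$ (memory) qubits, $\sigma_j=\nu_j\sigma_{X,j}\sigma_{Z,j}$, with characteristic numbers $\eta_j$. Add ancilla qubits $(0,j)$ and $(1,j)$, $j=1,\dots,q$, with Pauli operators $X_{\alpha,j},Y_{\alpha,j},Z_{\alpha,j}$. For any memory state $|\psi\rangle$ let $|\Psi_i\rangle=|\psi\rangle\otimes\bigotimes_j|+\rangle_{0,j}\otimes\bigotimes_j|y+\rangle_{1,j}$ (with $X|+\rangle=|+\rangle$, $Y|y+\rangle=|y+\rangle$). For outcomes $\mu_{X,j},\mu_{Z,j},\mu_{0,j},\mu_{1,j}\in\{\pm1\}$ define $$|\Psi_f\rangle=\Big(\prod_j\sigma_{Z,j}^{c_j}\Big)\Big(\prod_j\tfrac{1+\mu_{1,j}Y_{1,j}}2\Big)\Big(\prod_j\tfrac{1+\mu_{0,j}X_{0,j}}2\Big)\Big(\prod_j\tfrac{1+\mu_{Z,j}\sigma_{Z,j}Z_{0,j}^{1-\eta_j}X_{1,j}^{\eta_j}}2\Big)\Big(\prod_j\tfrac{1+\mu_{X,j}\sigma_{X,j}Z_{0,j}^{1-\eta_j}Z_{1,j}^{\eta_j}}2\Big)|\Psi_i\rangle,$$ where $c_j=1$ if ($\eta_j=0$ and $\mu_{0,j}=-1$) or ($\eta_j=1$ and $\mu_{1,j}=-1$), and $c_j=0$ otherwise. Then $$|\Psi_f\rangle=\Big(\prod_{j=1}^q\tfrac{1+(-i)^{\eta_j}\nu_j\mu_{X,j}\mu_{Z,j}\sigma_j}{2}\Big)|\psi\rangle\otimes|\phi\rangle$$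 for some ancilla state $|\phi\rangle$ whose norm $\langle\phi|\phi\rangle$ does not depend on the outcomes $\mu_{X,j},\mu_{Z,j}$. (That is, the protocol realises the simultaneous measurement of $\Theta$ with outcome $(-i)^{\eta_j}\nu_j\mu_{X,j}\mu_{Z,j}$ for $\sigma_j$.)
   Context: Every Pauli operator $\sigma$ (with phase) on a set of qubits can be written uniquely as $\sigma=\nu\sigma_X\sigma_Z$ with $\nu\in\{\pm1,\pm i\}$, $\sigma_X$ a tensor product of Pauli $X$ and identity factors, and $\sigma_Z$ a tensor product of Pauli $Z$ and identity factors; here the operators $\sigma_j$ are Hermitian. The characteristic number $\eta_j$ of $\sigma_j$ is $0$ if $\sigma_{X,j}$ and $\sigma_{Z,j}$ commute and $1$ if they anticommute (so $\nu_j=\pm1$ when $\eta_j=0$ and $\nu_j=\pm i$ when $\eta_j=1$). A set $\{\sigma_1,\dots,\sigma_q\}$ is regular if $\sigma_{X,i}$ commutes with $\sigma_{Z,j}$ for all $i\neq j$. Memory operators act on the memory factor only; ancilla operators act on the indicated ancilla qubit only. *)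

theory Defs
  imports Complex_Main
begin

text \<open>Qubits are indexed by finite types: memory qubits by 'm, and the ancilla
qubit (alpha, j) by the pair (alpha, j) :: bool \<times> 'q (False = 0, True = 1).
A computational basis configuration of the whole system is a pair
(memory bit assignment, ancilla bit assignment); bit False is |0>, True is |1>.\<close>

type_synonym 'm mstate = "('m \<Rightarrow> bool) \<Rightarrow> complex"
type_synonym 'q astate = "(bool \<times> 'q \<Rightarrow> bool) \<Rightarrow> complex"
type_synonym ('m,'q) qstate = "('m \<Rightarrow> bool) \<times> (bool \<times> 'q \<Rightarrow> bool) \<Rightarrow> complex"

definition flipset :: "'a set \<Rightarrow> ('a \<Rightarrow> bool) \<Rightarrow> ('a \<Rightarrow> bool)" where
  "flipset A x = (\<lambda>i. if i \<in> A then \<not> x i else x i)"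

text \<open>Memory operators: sigma_X = tensor of X on the qubits in A, sigma_Z = tensor of Z on B.\<close>
definition mX :: "'m set \<Rightarrow> 'm mstate \<Rightarrow> 'm mstate" where
  "mX A \<psi> = (\<lambda>x. \<psi> (flipset A x))"

definition mZ :: "'m set \<Rightarrow> 'm mstate \<Rightarrow> 'm mstate" where
  "mZ B \<psi> = (\<lambda>x. (-1) ^ card {i \<in> B. x i} * \<psi> x)"

definition mpauli :: "complex \<Rightarrow> 'm set \<Rightarrow> 'm set \<Rightarrow> 'm mstate \<Rightarrow> 'm mstate" where
  "mpauli \<nu> A B \<psi> = (\<lambda>x. \<nu> * mX A (mZ B \<psi>) x)"

definition char_num :: "'m set \<Rightarrow> 'm set \<Rightarrow> nat" where
  "char_num A B = (if mX A \<circ> mZ B = mZ B \<circ> mX A then 0 else 1)"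

definition regular :: "('q \<Rightarrow> 'm set) \<Rightarrow> ('q \<Rightarrow> 'm set) \<Rightarrow> bool" where
  "regular a b \<longleftrightarrow> (\<forall>i j. i \<noteq> j \<longrightarrow> mX (a i) \<circ> mZ (b j) = mZ (b j) \<circ> mX (a i))"

definition liftM :: "('m mstate \<Rightarrow> 'm mstate) \<Rightarrow> ('m,'q) qstate \<Rightarrow> ('m,'q) qstate" where
  "liftM Op \<Psi> = (\<lambda>(x, s). Op (\<lambda>x'. \<Psi> (x', s)) x)"

definition aX :: "bool \<times> 'q \<Rightarrow> ('m,'q) qstate \<Rightarrow> ('m,'q) qstate" where
  "aX v \<Psi> = (\<lambda>(x, s). \<Psi> (x, s(v := \<not> s v)))"

definition aZ :: "bool \<times> 'q \<Rightarrow> ('m,'q) qstate \<Rightarrow> ('m,'q) qstate" where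
  "aZ v \<Psi> = (\<lambda>(x, s). (if s v then -1 else 1) * \<Psi> (x, s))"

definition aY :: "bool \<times> 'q \<Rightarrow> ('m,'q) qstate \<Rightarrow> ('m,'q) qstate" where
  "aY v \<Psi> = (\<lambda>(x, s). (if s v then \<i> else - \<i>) * \<Psi> (x, s(v := \<not> s v)))"

definition proj :: "complex \<Rightarrow> (('c \<Rightarrow> complex) \<Rightarrow> ('c \<Rightarrow> complex))
                    \<Rightarrow> ('c \<Rightarrow> complex) \<Rightarrow> ('c \<Rightarrow> complex)" where
  "proj \<theta> Op \<Psi> = (\<lambda>c. (\<Psi> c + \<theta> * Op \<Psi> c) / 2)"

text \<open>Product (composition) of operators F j over all j (in the enumeration order;
in the statement all factors of each product commute).\<close>
definition oprod :: "('q::enum \<Rightarrow> ('c \<Rightarrow> 'c)) \<Rightarrow> 'c \<Rightarrow> 'c" where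
  "oprod F = foldr (\<lambda>j A. F j \<circ> A) Enum.enum id"

definition tens :: "'m mstate \<Rightarrow> 'q astate \<Rightarrow> ('m,'q) qstate" where
  "tens \<psi> \<phi> = (\<lambda>(x, s). \<psi> x * \<phi> s)"

text \<open>Initial ancilla state: |+> on every (0,j), |y+> = (|0> + i|1>)/sqrt 2 on every (1,j).\<close>
definition anc_init :: "'q::finite astate" where
  "anc_init s = (\<Prod>j\<in>UNIV. complex_of_real (1 / sqrt 2)
                      * ((if s (True, j) then \<i> else 1) / complex_of_real (sqrt 2)))"

definition anorm :: "'q::finite astate \<Rightarrow> real" where
  "anorm \<phi> = (\<Sum>s\<in>UNIV. (cmod (\<phi> s))\<^sup>2)"

definition corr :: "nat \<Rightarrow> complex \<Rightarrow> complex \<Rightarrow> nat" where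
  "corr \<eta> m0 m1 = (if (\<eta> = 0 \<and> m0 = -1) \<or> (\<eta> = 1 \<and> m1 = -1) then 1 else 0)"

definition Psi_f :: "('q::enum \<Rightarrow> 'm::finite set) \<Rightarrow> ('q \<Rightarrow> 'm set)
     \<Rightarrow> ('q \<Rightarrow> complex) \<Rightarrow> ('q \<Rightarrow> complex) \<Rightarrow> ('q \<Rightarrow> complex) \<Rightarrow> ('q \<Rightarrow> complex)
     \<Rightarrow> 'm mstate \<Rightarrow> ('m,'q) qstate" where
  "Psi_f a b \<mu>X \<mu>Z \<mu>0 \<mu>1 \<psi> =
    (let \<eta> = (\<lambda>j. char_num (a j) (b j)) in
     oprod (\<lambda>j. liftM (mZ (b j) ^^ corr (\<eta> j) (\<mu>0 j) (\<mu>1 j)))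
      (oprod (\<lambda>j. proj (\<mu>1 j) (aY (True, j)))
       (oprod (\<lambda>j. proj (\<mu>0 j) (aX (False, j)))
        (oprod (\<lambda>j. proj (\<mu>Z j) (liftM (mZ (b j)) \<circ> (aZ (False, j) ^^ (1 - \<eta> j))
                                                  \<circ> (aX (True, j) ^^ \<eta> j)))
         (oprod (\<lambda>j. proj (\<mu>X j) (liftM (mX (a j)) \<circ> (aZ (False, j) ^^ (1 - \<eta> j))
                                                   \<circ> (aZ (True, j) ^^ \<eta> j)))
          (tens \<psi> anc_init))))))"

end

theory Submission
  imports Defs
begin


definition zz :: "'m set \<Rightarrow> ('m \<Rightarrow> bool) \<Rightarrow> complex" where
  "zz B x = (-1) ^ card {i \<in> B. x i}"

lemma proj_apply: "proj \<theta> Op \<Psi> c = (\<Psi> c + \<theta> * Op \<Psi> c) / 2"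
  by (simp add: proj_def)
lemma aX_apply: "aX v \<Psi> (x, s) = \<Psi> (x, s(v := \<not> s v))" by (simp add: aX_def)
lemma aZ_apply: "aZ v \<Psi> (x, s) = (if s v then -1 else 1) * \<Psi> (x, s)" by (simp add: aZ_def)
lemma aY_apply: "aY v \<Psi> (x, s) = (if s v then \<i> else - \<i>) * \<Psi> (x, s(v := \<not> s v))" by (simp add: aY_def)
lemma liftM_apply: "liftM Op \<Psi> (x, s) = Op (\<lambda>x'. \<Psi> (x', s)) x" by (simp add: liftM_def)
lemma mX_apply: "mX A f x = f (flipset A x)" by (simp add: mX_def)
lemma mZ_apply: "mZ B f x = zz B x * f x" by (simp add: mZ_def zz_def)
lemma flip_flip[simp]: "flipset A (flipset A x) = x" by (auto simp: flipset_def)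

definition ini :: "bool \<Rightarrow> complex" where
  "ini c = complex_of_real (1 / sqrt 2) * ((if c then \<i> else 1) / complex_of_real (sqrt 2))"

lemma ini_eq: "ini c = (if c then \<i> else 1) / 2"
proof -
  have "complex_of_real (1 / sqrt 2) * (1 / complex_of_real (sqrt 2)) = 1/2"
    by (simp add: field_simps flip: of_real_mult)
  then show ?thesis unfolding ini_def by (cases c) (auto simp: field_simps)
qed

definition phi :: "nat \<Rightarrow> complex \<Rightarrow> complex \<Rightarrow> complex \<Rightarrow> bool \<Rightarrow> bool \<Rightarrow> complex" where
  "phi \<eta> mz m0 m1 b c = (if \<eta> = 0 then (if m0 = 1 then 1 else mz) * (if b then m0 else 1) * (if c then \<i> else 1) / 4 * (if m1 = 1 then 1 else 0)
    else (if m0 = 1 then 1 else 0) * (if m1 = 1 then 1 else \<i> * mz) * (if c then \<i> * m1 else 1) / 4)"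

definition Gop :: "'m set \<Rightarrow> 'm set \<Rightarrow> nat \<Rightarrow> complex \<Rightarrow> complex \<Rightarrow> complex \<Rightarrow> complex \<Rightarrow> 'q \<Rightarrow> ('m,'q) qstate \<Rightarrow> ('m,'q) qstate" where
"Gop A B \<eta> mx mz m0 m1 j = liftM (mZ B ^^ corr \<eta> m0 m1) \<circ> (proj m1 (aY (True,j)) \<circ> (proj m0 (aX (False,j)) \<circ>
   (proj mz (liftM (mZ B) \<circ> (aZ (False, j) ^^ (1 - \<eta>)) \<circ> (aX (True, j) ^^ \<eta>)) \<circ>
    proj mx (liftM (mX A) \<circ> (aZ (False, j) ^^ (1 - \<eta>)) \<circ> (aZ (True, j) ^^ \<eta>)))))"



lemma step:
  fixes R :: "(bool \<times> 'q \<Rightarrow> bool) \<Rightarrow> complex"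
  assumes RF: "\<And>s v. R (s((False,j) := v)) = R s" and RT: "\<And>s v. R (s((True,j) := v)) = R s"
    and eta: "\<eta> = 0 \<or> \<eta> = 1"
    and zf: "\<And>x. zz B (flipset A x) = (if \<eta> = 0 then 1 else -1) * zz B x"
    and zv: "\<And>x. zz B x = 1 \<or> zz B x = -1"
    and nu: "(\<eta> = 0 \<longrightarrow> \<nu> \<in> {1, -1}) \<and> (\<eta> = 1 \<longrightarrow> \<nu> \<in> {\<i>, -\<i>})"
    and m: "mx \<in> {1,-1}" "mz \<in> {1,-1}" "m0 \<in> {1,-1}" "m1 \<in> {1,-1}"
  shows "Gop A B \<eta> mx mz m0 m1 j (\<lambda>(x,s). g x * ini (s (True,j)) * R s)
       = (\<lambda>(x,s). proj ((- \<i>) ^ \<eta> * \<nu> * mx * mz) (mpauli \<nu> A B) g x * phi \<eta> mz m0 m1 (s (False,j)) (s (True,j)) * R s)"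
proof (rule ext, clarify)
  fix x s
  show "Gop A B \<eta> mx mz m0 m1 j (\<lambda>(x,s). g x * ini (s (True,j)) * R s) (x,s)
       = proj ((- \<i>) ^ \<eta> * \<nu> * mx * mz) (mpauli \<nu> A B) g x * phi \<eta> mz m0 m1 (s (False,j)) (s (True,j)) * R s"
    using eta
  proof
    assume e: "\<eta> = 0"
    have z: "zz B (flipset A x) = zz B x" using zf e by simp
    show ?thesis using zv[of x] nu m e
      apply (simp only: insert_iff singleton_iff empty_iff simp_thms)
      apply (elim disjE conjE)
      apply (simp_all add: Gop_def proj_apply aX_apply aZ_apply aY_apply liftM_apply mX_apply mZ_apply ini_eq RF RT z corr_def phi_def mpauli_def)
      apply (cases "s (False,j)"; cases "s (True,j)")
      apply (auto simp: field_simps)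
      done
  next
    assume e: "\<eta> = 1"
    have z: "zz B (flipset A x) = - zz B x" using zf e by simp
    show ?thesis using zv[of x] nu m e
      apply (simp only: insert_iff singleton_iff empty_iff simp_thms)
      apply (elim disjE conjE)
      apply (simp_all add: Gop_def proj_apply aX_apply aZ_apply aY_apply liftM_apply mX_apply mZ_apply ini_eq RF RT z corr_def phi_def mpauli_def)
      apply (cases "s (False,j)"; cases "s (True,j)")
      apply (auto simp: field_simps)
      done
  qed
qed


definition comm :: "('c \<Rightarrow> 'c) \<Rightarrow> ('c \<Rightarrow> 'c) \<Rightarrow> bool" where
  "comm F G \<longleftrightarrow> F \<circ> G = G \<circ> F"

definition lin :: "(('c \<Rightarrow> complex) \<Rightarrow> ('c \<Rightarrow> complex)) \<Rightarrow> bool" where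
  "lin L \<longleftrightarrow> (\<forall>\<alpha> \<beta> \<Psi> \<Phi>. L (\<lambda>c. \<alpha> * \<Psi> c + \<beta> * \<Phi> c) = (\<lambda>c. \<alpha> * L \<Psi> c + \<beta> * L \<Phi> c))"

lemma linD: "lin L \<Longrightarrow> L (\<lambda>c. \<alpha> * \<Psi> c + \<beta> * \<Phi> c) = (\<lambda>c. \<alpha> * L \<Psi> c + \<beta> * L \<Phi> c)"
  by (simp add: lin_def)

lemma lin_scale: "lin L \<Longrightarrow> L (\<lambda>c. \<alpha> * \<Psi> c) = (\<lambda>c. \<alpha> * L \<Psi> c)"
proof -
  assume "lin L"
  from linD[OF this, of \<alpha> \<Psi> 0 \<Psi>] show ?thesis by simp
qed

lemma lin_scale_pt: "lin L \<Longrightarrow> L (\<lambda>c. \<alpha> * \<Psi> c) x = \<alpha> * L \<Psi> x"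
  by (simp add: lin_scale)

lemma proj_alt: "proj \<theta> Op \<Psi> = (\<lambda>c. (1/2) * \<Psi> c + (\<theta>/2) * Op \<Psi> c)"
  by (rule ext) (simp add: proj_def field_simps)

lemma lin_proj: "lin Op \<Longrightarrow> lin (proj \<theta> Op)"
  unfolding lin_def proj_alt by (auto simp: algebra_simps)

lemma lin_comp: "lin F \<Longrightarrow> lin G \<Longrightarrow> lin (F \<circ> G)"
  unfolding lin_def by simp

lemma lin_id: "lin id"
  unfolding lin_def by simp

lemma lin_pow: "lin F \<Longrightarrow> lin (F ^^ n)"
  by (induction n) (auto intro: lin_id lin_comp)

lemma lin_mX: "lin (mX A)" unfolding lin_def mX_def by simp
lemma lin_mZ: "lin (mZ B)" unfolding lin_def mZ_def by (auto simp: algebra_simps)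
lemma lin_aX: "lin (aX v)" unfolding lin_def aX_def by auto
lemma lin_aZ: "lin (aZ v)" unfolding lin_def aZ_def by (auto simp: algebra_simps)
lemma lin_aY: "lin (aY v)" unfolding lin_def aY_def by (auto simp: algebra_simps)
lemma lin_liftM: "lin Op \<Longrightarrow> lin (liftM Op)"
  unfolding lin_def liftM_def
  apply (intro allI ext)
  apply (clarsimp split: prod.splits)
  done

lemma comm_comp_right: "comm A B \<Longrightarrow> comm A C \<Longrightarrow> comm A (B \<circ> C)"
  unfolding comm_def fun_eq_iff comp_apply by simp
lemma comm_comp_left: "comm A C \<Longrightarrow> comm B C \<Longrightarrow> comm (A \<circ> B) C"
  unfolding comm_def fun_eq_iff comp_apply by simp
lemma comm_pow_right: "comm A B \<Longrightarrow> comm A (B ^^ n)"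
proof -
  assume "comm A B"
  then have h: "\<And>x. A (B x) = B (A x)" unfolding comm_def fun_eq_iff by simp
  have "\<And>x. A ((B ^^ n) x) = (B ^^ n) (A x)"
    by (induction n) (simp_all add: h)
  then show ?thesis unfolding comm_def fun_eq_iff by simp
qed
lemma comm_sym: "comm A B \<Longrightarrow> comm B A" unfolding comm_def by simp
lemma comm_pow_left: "comm B A \<Longrightarrow> comm (B ^^ n) A"
  by (rule comm_sym, rule comm_pow_right, rule comm_sym)
lemma comm_proj_right: "lin A \<Longrightarrow> comm A Op \<Longrightarrow> comm A (proj \<theta> Op)"
proof -
  assume l: "lin A" and "comm A Op"
  then have h: "\<And>x. A (Op x) = Op (A x)" unfolding comm_def fun_eq_iff by simp
  show ?thesis unfolding comm_def fun_eq_iff comp_apply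
    unfolding proj_alt by (simp only: linD[OF l] h simp_thms)
qed
lemma comm_proj_left: "lin A \<Longrightarrow> comm Op A \<Longrightarrow> comm (proj \<theta> Op) A"
  by (rule comm_sym, rule comm_proj_right, assumption, rule comm_sym)

lemma comm_pw: "(\<And>\<Psi> x s. F (G \<Psi>) (x,s) = G (F \<Psi>) (x,s)) \<Longrightarrow> comm F G"
  unfolding comm_def fun_eq_iff comp_apply by auto

lemma liftM_comp: "liftM A (liftM B \<Psi>) = liftM (A \<circ> B) \<Psi>"
  unfolding liftM_def by (rule ext) (auto split: prod.splits)
lemma liftM_id: "liftM id = id"
  unfolding liftM_def by (rule ext, rule ext) (auto split: prod.splits)
lemma liftM_comp': "liftM A \<circ> liftM B = liftM (A \<circ> B)"
  by (rule ext) (simp add: liftM_comp)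
lemma liftM_pow: "liftM (A ^^ n) = liftM A ^^ n"
proof (induction n)
  case 0 then show ?case using liftM_id by (simp add: id_def)
next
  case (Suc n)
  have "liftM (A ^^ Suc n) = liftM A \<circ> liftM (A ^^ n)" by (simp add: liftM_comp')
  then show ?case using Suc.IH by (metis funpow.simps(2))
qed

lemma comm_liftM: "comm A B \<Longrightarrow> comm (liftM A) (liftM B)"
  unfolding comm_def by (simp add: liftM_comp')

lemma comm_liftM_aX: "comm (liftM A) (aX v)" "comm (aX v) (liftM A)"
  unfolding comm_def by (auto simp: fun_eq_iff liftM_def aX_def)
lemma comm_liftM_aZ: "lin A \<Longrightarrow> comm (liftM A) (aZ v)" "lin A \<Longrightarrow> comm (aZ v) (liftM A)"
proof -
  assume l: "lin A"
  have "\<And>\<Psi> x s. liftM A (aZ v \<Psi>) (x,s) = aZ v (liftM A \<Psi>) (x,s)"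
    unfolding liftM_apply aZ_apply by (rule lin_scale_pt[OF l])
  then show "comm (liftM A) (aZ v)" "comm (aZ v) (liftM A)"
    by (auto intro!: comm_pw)
qed
lemma comm_liftM_aY: "lin A \<Longrightarrow> comm (liftM A) (aY v)" "lin A \<Longrightarrow> comm (aY v) (liftM A)"
proof -
  assume l: "lin A"
  have "\<And>\<Psi> x s. liftM A (aY v \<Psi>) (x,s) = aY v (liftM A \<Psi>) (x,s)"
    unfolding liftM_apply aY_apply by (rule lin_scale_pt[OF l])
  then show "comm (liftM A) (aY v)" "comm (aY v) (liftM A)"
    by (auto intro!: comm_pw)
qed

lemma comm_aZ_aZ: "comm (aZ v) (aZ w)"
  unfolding comm_def by (auto simp: fun_eq_iff aZ_def)
lemma comm_aX_aX: "comm (aX v) (aX w)"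
  unfolding comm_def
proof (rule ext, rule ext, clarify)
  fix \<Psi> :: "('a,'b) qstate" and x s
  show "(aX v \<circ> aX w) \<Psi> (x, s) = (aX w \<circ> aX v) \<Psi> (x, s)"
    by (cases "v = w") (simp_all add: aX_def fun_upd_twist)
qed
lemma comm_aZ_aX: "v \<noteq> w \<Longrightarrow> comm (aZ v) (aX w)" "v \<noteq> w \<Longrightarrow> comm (aX w) (aZ v)"
  unfolding comm_def by (auto simp: fun_eq_iff aX_def aZ_def)
lemma comm_aY_aX: "v \<noteq> w \<Longrightarrow> comm (aY v) (aX w)" "v \<noteq> w \<Longrightarrow> comm (aX w) (aY v)"
  unfolding comm_def by (auto simp: fun_eq_iff aX_def aY_def fun_upd_twist)
lemma comm_aY_aZ: "v \<noteq> w \<Longrightarrow> comm (aY v) (aZ w)" "v \<noteq> w \<Longrightarrow> comm (aZ w) (aY v)"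
  unfolding comm_def by (auto simp: fun_eq_iff aZ_def aY_def)

lemma flip_comm: "flipset A (flipset B x) = flipset B (flipset A x)"
  by (auto simp: flipset_def fun_eq_iff)
lemma comm_mX_mX: "comm (mX A) (mX B)"
  unfolding comm_def by (simp add: fun_eq_iff mX_def flip_comm)
lemma comm_mZ_mZ: "comm (mZ A) (mZ B)"
  unfolding comm_def by (auto simp: fun_eq_iff mZ_def)

lemma foldr_comm: "(\<forall>j\<in>set xs. comm (F j) H) \<Longrightarrow> comm (foldr (\<lambda>j A. F j \<circ> A) xs id) H"
proof (induction xs)
  case Nil then show ?case by (simp add: comm_def fun_eq_iff)
next
  case (Cons a xs)
  have h1: "comm (foldr (\<lambda>j A. F j \<circ> A) xs id) H"
    using Cons.prems by (intro Cons.IH) simp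
  then have 1: "foldr (\<lambda>j A. F j \<circ> A) xs id \<circ> H = H \<circ> foldr (\<lambda>j A. F j \<circ> A) xs id"
    by (simp only: comm_def)
  have 2: "F a \<circ> H = H \<circ> F a" using Cons.prems by (simp add: comm_def)
  have "F a \<circ> foldr (\<lambda>j A. F j \<circ> A) xs id \<circ> H = F a \<circ> H \<circ> foldr (\<lambda>j A. F j \<circ> A) xs id"
    using 1 by (simp add: comp_assoc)
  also have "\<dots> = H \<circ> (F a \<circ> foldr (\<lambda>j A. F j \<circ> A) xs id)"
    using 2 by (simp add: comp_assoc)
  finally have fin: "F a \<circ> foldr (\<lambda>j A. F j \<circ> A) xs id \<circ> H = H \<circ> (F a \<circ> foldr (\<lambda>j A. F j \<circ> A) xs id)" .
  have eq: "foldr (\<lambda>j A. F j \<circ> A) (a#xs) id = F a \<circ> foldr (\<lambda>j A. F j \<circ> A) xs id" by simp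
  show ?case unfolding comm_def eq using fin by (simp add: comp_assoc)
qed

lemma foldr_merge: "distinct xs \<Longrightarrow> (\<forall>i j. i \<noteq> j \<longrightarrow> comm (F i) (G j)) \<Longrightarrow>
  foldr (\<lambda>j A. F j \<circ> A) xs id \<circ> foldr (\<lambda>j A. G j \<circ> A) xs id = foldr (\<lambda>j A. (F j \<circ> G j) \<circ> A) xs id"
proof (induction xs)
  case Nil then show ?case by simp
next
  case (Cons a xs)
  have c: "comm (foldr (\<lambda>j A. F j \<circ> A) xs id) (G a)"
  proof (rule foldr_comm, rule ballI)
    fix j assume "j \<in> set xs"
    with Cons.prems have "j \<noteq> a" by auto
    with Cons.prems show "comm (F j) (G a)" by blast
  qed
  have "foldr (\<lambda>j A. F j \<circ> A) (a # xs) id \<circ> foldr (\<lambda>j A. G j \<circ> A) (a # xs) id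
      = F a \<circ> (foldr (\<lambda>j A. F j \<circ> A) xs id \<circ> G a) \<circ> foldr (\<lambda>j A. G j \<circ> A) xs id"
    by (simp add: comp_assoc)
  also have "\<dots> = (F a \<circ> G a) \<circ> (foldr (\<lambda>j A. F j \<circ> A) xs id \<circ> foldr (\<lambda>j A. G j \<circ> A) xs id)"
    using c by (simp add: comm_def comp_assoc)
  also have "\<dots> = (F a \<circ> G a) \<circ> foldr (\<lambda>j A. (F j \<circ> G j) \<circ> A) xs id"
  proof -
    have IH: "foldr (\<lambda>j A. F j \<circ> A) xs id \<circ> foldr (\<lambda>j A. G j \<circ> A) xs id = foldr (\<lambda>j A. (F j \<circ> G j) \<circ> A) xs id"
      using Cons.prems by (intro Cons.IH) auto
    show ?thesis by (simp only: IH)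
  qed
  also have "\<dots> = foldr (\<lambda>j A. (F j \<circ> G j) \<circ> A) (a # xs) id"
    by simp
  finally show ?case .
qed

lemma oprod_merge: "(\<forall>i j. i \<noteq> j \<longrightarrow> comm (F i) (G j)) \<Longrightarrow>
   oprod F (oprod G \<Psi>) = oprod (\<lambda>j. F j \<circ> G j) \<Psi>"
proof -
  assume h: "\<forall>i j. i \<noteq> j \<longrightarrow> comm (F i) (G j)"
  show ?thesis
    using fun_cong[OF foldr_merge[OF enum_distinct h], of \<Psi>] unfolding oprod_def comp_apply .
qed

lemmas my_intros = lin_proj lin_comp lin_id lin_pow lin_mX lin_mZ lin_aX lin_aZ lin_aY lin_liftM comm_comp_right comm_comp_left comm_pow_right comm_pow_left comm_proj_right comm_proj_left comm_liftM comm_liftM_aX comm_liftM_aZ comm_liftM_aY comm_aZ_aZ comm_aX_aX comm_aZ_aX comm_aY_aX comm_aY_aZ comm_mX_mX comm_mZ_mZ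



lemma zz_flip: "zz B (flipset A (x::'m::finite \<Rightarrow> bool)) = (-1) ^ card (A \<inter> B) * zz B x"
proof -
  let ?P = "{i \<in> B - A. x i}" and ?Q = "{i \<in> B \<inter> A. x i}" and ?R = "{i \<in> B \<inter> A. \<not> x i}"
  have Y: "{i \<in> B. flipset A x i} = ?P \<union> ?R" by (auto simp: flipset_def)
  have X: "{i \<in> B. x i} = ?P \<union> ?Q" by auto
  have AB: "A \<inter> B = ?Q \<union> ?R" by auto
  have cY: "card {i \<in> B. flipset A x i} = card ?P + card ?R"
    unfolding Y by (rule card_Un_disjoint) auto
  have cX: "card {i \<in> B. x i} = card ?P + card ?Q"
    unfolding X by (rule card_Un_disjoint) auto
  have cAB: "card (A \<inter> B) = card ?Q + card ?R"
    unfolding AB by (rule card_Un_disjoint) auto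
  have "(-1::complex) ^ card {i \<in> B. flipset A x i} = (-1) ^ (card ?P + card ?R)" by (simp add: cY)
  also have "\<dots> = (-1) ^ (card ?Q + card ?R) * (-1) ^ (card ?P + card ?Q)"
  proof -
    have "(-1::complex) ^ (card ?Q + card ?R) * (-1) ^ (card ?P + card ?Q)
        = (-1) ^ (card ?P + card ?R) * ((-1) ^ card ?Q * (-1) ^ card ?Q)"
      by (simp add: power_add algebra_simps)
    also have "(-1::complex) ^ card ?Q * (-1) ^ card ?Q = 1"
      by (simp flip: power_add)
    finally show ?thesis by simp
  qed
  finally show ?thesis unfolding zz_def cX cAB .
qed

lemma zz_val: "zz B x = 1 \<or> zz B x = -1"
  unfolding zz_def by (cases "even (card {i \<in> B. x i})") auto

lemma char_num_zf: "zz B (flipset A (x::'m::finite \<Rightarrow> bool)) = (if char_num A B = 0 then 1 else -1) * zz B x"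
proof (cases "even (card (A \<inter> B))")
  case True
  then have z: "\<And>x::'m \<Rightarrow> bool. zz B (flipset A x) = zz B x" by (simp add: zz_flip)
  have "mX A \<circ> mZ B = mZ B \<circ> mX A"
    by (auto simp: fun_eq_iff mX_apply mZ_apply z)
  then have "char_num A B = 0" by (simp add: char_num_def)
  then show ?thesis using z by simp
next
  case False
  then have z: "\<And>x::'m \<Rightarrow> bool. zz B (flipset A x) = - zz B x" by (simp add: zz_flip)
  have "mX A \<circ> mZ B \<noteq> mZ B \<circ> mX A"
  proof
    assume "mX A \<circ> mZ B = mZ B \<circ> mX A"
    then have "mX A (mZ B (\<lambda>_. 1)) x = mZ B (mX A (\<lambda>_. 1)) x" by (metis comp_apply)
    then have "zz B x = - zz B x" by (simp add: mX_apply mZ_apply z)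
    then show False using zz_val[of B x] by auto
  qed
  then have "char_num A B = 1" by (simp add: char_num_def)
  then show ?thesis using z by simp
qed

lemma char_num_01: "char_num A B = 0 \<or> char_num A B = 1"
  by (simp add: char_num_def)



lemma induct_main:
  fixes a b :: "'q::enum \<Rightarrow> 'm::finite set" and \<nu> mx mz m0 m1 :: "'q \<Rightarrow> complex"
    and \<psi> :: "'m mstate"
  assumes nu: "\<And>j. (char_num (a j) (b j) = 0 \<longrightarrow> \<nu> j \<in> {1, -1}) \<and> (char_num (a j) (b j) = 1 \<longrightarrow> \<nu> j \<in> {\<i>, -\<i>})"
    and m: "\<And>j. mx j \<in> {1,-1}" "\<And>j. mz j \<in> {1,-1}" "\<And>j. m0 j \<in> {1,-1}" "\<And>j. m1 j \<in> {1,-1}"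
  shows "distinct xs \<Longrightarrow>
    foldr (\<lambda>j A. Gop (a j) (b j) (char_num (a j) (b j)) (mx j) (mz j) (m0 j) (m1 j) j \<circ> A) xs id (tens \<psi> anc_init)
    = (\<lambda>(x,s). foldr (\<lambda>j A. proj ((- \<i>) ^ char_num (a j) (b j) * \<nu> j * mx j * mz j) (mpauli (\<nu> j) (a j) (b j)) \<circ> A) xs id \<psi> x
        * (\<Prod>k\<in>UNIV. if k \<in> set xs then phi (char_num (a k) (b k)) (mz k) (m0 k) (m1 k) (s (False,k)) (s (True,k))
                      else ini (s (True,k))))"
proof (induction xs)
  case Nil
  show ?case by (auto simp: fun_eq_iff tens_def anc_init_def ini_def)
next
  case (Cons j xs)
  let ?P = "\<lambda>j. proj ((- \<i>) ^ char_num (a j) (b j) * \<nu> j * mx j * mz j) (mpauli (\<nu> j) (a j) (b j))"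
  let ?f = "\<lambda>xs s k. if k \<in> set xs then phi (char_num (a k) (b k)) (mz k) (m0 k) (m1 k) (s (False,k)) (s (True,k))
                      else ini (s (True,k))"
  define g where "g = foldr (\<lambda>j A. ?P j \<circ> A) xs id \<psi>"
  define R where "R = (\<lambda>s. \<Prod>k\<in>UNIV - {j}. ?f xs s k)"
  have jn: "j \<notin> set xs" using Cons.prems by simp
  have IH: "foldr (\<lambda>j A. Gop (a j) (b j) (char_num (a j) (b j)) (mx j) (mz j) (m0 j) (m1 j) j \<circ> A) xs id (tens \<psi> anc_init)
     = (\<lambda>(x,s). g x * ini (s (True,j)) * R s)"
  proof -
    have pf: "\<And>s. (\<Prod>k\<in>UNIV. ?f xs s k) = ?f xs s j * R s"
      unfolding R_def by (rule prod.remove) auto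
    have IH0: "foldr (\<lambda>j A. Gop (a j) (b j) (char_num (a j) (b j)) (mx j) (mz j) (m0 j) (m1 j) j \<circ> A) xs id (tens \<psi> anc_init)
      = (\<lambda>(x,s). g x * (\<Prod>k\<in>UNIV. ?f xs s k))"
      unfolding g_def using Cons.prems by (intro Cons.IH) simp
    also have "\<dots> = (\<lambda>(x,s). g x * ini (s (True,j)) * R s)"
      using pf jn by (auto simp: fun_eq_iff mult.assoc)
    finally show ?thesis .
  qed
  have RF: "\<And>s v. R (s((False,j) := v)) = R s" and RT: "\<And>s v. R (s((True,j) := v)) = R s"
    unfolding R_def by (intro prod.cong refl; simp)+
  have st: "Gop (a j) (b j) (char_num (a j) (b j)) (mx j) (mz j) (m0 j) (m1 j) j (\<lambda>(x,s). g x * ini (s (True,j)) * R s)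
       = (\<lambda>(x,s). ?P j g x * phi (char_num (a j) (b j)) (mz j) (m0 j) (m1 j) (s (False,j)) (s (True,j)) * R s)"
    apply (rule step[where A="a j" and B="b j" and \<eta>="char_num (a j) (b j)" and \<nu>="\<nu> j"])
            apply (rule RF)
           apply (rule RT)
          apply (rule char_num_01)
         apply (rule char_num_zf)
        apply (rule zz_val)
       apply (rule nu)
      apply (rule m(1))
     apply (rule m(2))
    apply (rule m(3))
   apply (rule m(4))
  done
  have "\<And>s. (\<Prod>k\<in>UNIV. ?f (j#xs) s k) = ?f (j#xs) s j * (\<Prod>k\<in>UNIV - {j}. ?f (j#xs) s k)"
    by (rule prod.remove) auto
  moreover have "\<And>s. (\<Prod>k\<in>UNIV - {j}. ?f (j#xs) s k) = R s"
    unfolding R_def by (rule prod.cong) auto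
  ultimately have pr: "\<And>s. (\<Prod>k\<in>UNIV. ?f (j#xs) s k) = phi (char_num (a j) (b j)) (mz j) (m0 j) (m1 j) (s (False,j)) (s (True,j)) * R s"
    by simp
  have "foldr (\<lambda>j A. Gop (a j) (b j) (char_num (a j) (b j)) (mx j) (mz j) (m0 j) (m1 j) j \<circ> A) (j#xs) id (tens \<psi> anc_init)
     = Gop (a j) (b j) (char_num (a j) (b j)) (mx j) (mz j) (m0 j) (m1 j) j
        (foldr (\<lambda>j A. Gop (a j) (b j) (char_num (a j) (b j)) (mx j) (mz j) (m0 j) (m1 j) j \<circ> A) xs id (tens \<psi> anc_init))"
    by simp
  also have "\<dots> = Gop (a j) (b j) (char_num (a j) (b j)) (mx j) (mz j) (m0 j) (m1 j) j (\<lambda>(x,s). g x * ini (s (True,j)) * R s)"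
    by (simp only: IH)
  also have "\<dots> = (\<lambda>(x,s). ?P j g x * phi (char_num (a j) (b j)) (mz j) (m0 j) (m1 j) (s (False,j)) (s (True,j)) * R s)"
    by (rule st)
  also have "\<dots> = (\<lambda>(x,s). foldr (\<lambda>j A. ?P j \<circ> A) (j#xs) id \<psi> x * (\<Prod>k\<in>UNIV. ?f (j#xs) s k))"
    unfolding pr by (auto simp: fun_eq_iff g_def mult.assoc)
  finally show ?case .
qed



lemma psi_f_merge:
  fixes a b :: "'q::enum \<Rightarrow> 'm::finite set"
  assumes reg: "regular a b"
  shows "Psi_f a b \<mu>X \<mu>Z \<mu>0 \<mu>1 \<psi> =
    oprod (\<lambda>j. Gop (a j) (b j) (char_num (a j) (b j)) (\<mu>X j) (\<mu>Z j) (\<mu>0 j) (\<mu>1 j) j) (tens \<psi> anc_init)"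
proof -
  have rg1: "\<And>i j. i \<noteq> j \<Longrightarrow> comm (mX (a i)) (mZ (b j))"
    using reg unfolding regular_def comm_def by blast
  have rg2: "\<And>i j. i \<noteq> j \<Longrightarrow> comm (mZ (b i)) (mX (a j))"
    by (rule comm_sym, rule rg1) auto
  define S1 where "S1 = (\<lambda>j. proj (\<mu>X j) (liftM (mX (a j)) \<circ> (aZ (False, j) ^^ (1 - char_num (a j) (b j)))
                                                   \<circ> (aZ (True, j) ^^ char_num (a j) (b j))))"
  define S2 where "S2 = (\<lambda>j. proj (\<mu>Z j) (liftM (mZ (b j)) \<circ> (aZ (False, j) ^^ (1 - char_num (a j) (b j)))
                                                  \<circ> (aX (True, j) ^^ char_num (a j) (b j))))"
  define S3 :: "'q \<Rightarrow> ('m,'q) qstate \<Rightarrow> ('m,'q) qstate" where "S3 = (\<lambda>j. proj (\<mu>0 j) (aX (False, j)))"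
  define S4 :: "'q \<Rightarrow> ('m,'q) qstate \<Rightarrow> ('m,'q) qstate" where "S4 = (\<lambda>j. proj (\<mu>1 j) (aY (True, j)))"
  define S5 :: "'q \<Rightarrow> ('m,'q) qstate \<Rightarrow> ('m,'q) qstate" where "S5 = (\<lambda>j. liftM (mZ (b j) ^^ corr (char_num (a j) (b j)) (\<mu>0 j) (\<mu>1 j)))"
  have c21: "\<forall>i j. i \<noteq> j \<longrightarrow> comm (S2 i) (S1 j)"
    unfolding S1_def S2_def by (intro allI impI my_intros rg1 rg2) simp_all
  have c3: "\<forall>i j. i \<noteq> j \<longrightarrow> comm (S3 i) (S2 j \<circ> S1 j)"
    unfolding S1_def S2_def S3_def by (intro allI impI my_intros rg1 rg2) simp_all
  have c4: "\<forall>i j. i \<noteq> j \<longrightarrow> comm (S4 i) (S3 j \<circ> (S2 j \<circ> S1 j))"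
    unfolding S1_def S2_def S3_def S4_def by (intro allI impI my_intros rg1 rg2) simp_all
  have c5: "\<forall>i j. i \<noteq> j \<longrightarrow> comm (S5 i) (S4 j \<circ> (S3 j \<circ> (S2 j \<circ> S1 j)))"
    unfolding S1_def S2_def S3_def S4_def S5_def by (intro allI impI my_intros rg1 rg2) simp_all
  have "Psi_f a b \<mu>X \<mu>Z \<mu>0 \<mu>1 \<psi> = oprod S5 (oprod S4 (oprod S3 (oprod S2 (oprod S1 (tens \<psi> anc_init)))))"
    unfolding Psi_f_def Let_def S1_def S2_def S3_def S4_def S5_def by (rule refl)
  also have "\<dots> = oprod S5 (oprod S4 (oprod S3 (oprod (\<lambda>j. S2 j \<circ> S1 j) (tens \<psi> anc_init))))"
    by (simp only: oprod_merge[OF c21])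
  also have "\<dots> = oprod S5 (oprod S4 (oprod (\<lambda>j. S3 j \<circ> (S2 j \<circ> S1 j)) (tens \<psi> anc_init)))"
    by (simp only: oprod_merge[OF c3])
  also have "\<dots> = oprod S5 (oprod (\<lambda>j. S4 j \<circ> (S3 j \<circ> (S2 j \<circ> S1 j))) (tens \<psi> anc_init))"
    by (simp only: oprod_merge[OF c4])
  also have "\<dots> = oprod (\<lambda>j. S5 j \<circ> (S4 j \<circ> (S3 j \<circ> (S2 j \<circ> S1 j)))) (tens \<psi> anc_init)"
    by (simp only: oprod_merge[OF c5])
  also have "\<dots> = oprod (\<lambda>j. Gop (a j) (b j) (char_num (a j) (b j)) (\<mu>X j) (\<mu>Z j) (\<mu>0 j) (\<mu>1 j) j) (tens \<psi> anc_init)"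
    unfolding Gop_def S1_def S2_def S3_def S4_def S5_def by (rule refl)
  finally show ?thesis .
qed

lemma phi_norm: "mz \<in> {1,-1} \<Longrightarrow> mz' \<in> {1,-1} \<Longrightarrow> cmod (phi \<eta> mz m0 m1 b c) = cmod (phi \<eta> mz' m0 m1 b c)"
  unfolding phi_def by (auto simp: norm_mult norm_divide)



theorem lemma8:
  fixes \<nu> :: "'q::enum \<Rightarrow> complex"
    and a b :: "'q \<Rightarrow> 'm::finite set"
    and \<psi> :: "'m mstate"
    and \<mu>0 \<mu>1 :: "'q \<Rightarrow> complex"
  assumes herm: "\<forall>j. (char_num (a j) (b j) = 0 \<longrightarrow> \<nu> j \<in> {1, -1})
                    \<and> (char_num (a j) (b j) = 1 \<longrightarrow> \<nu> j \<in> {\<i>, -\<i>})"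
    and reg: "regular a b"
    and comm: "\<forall>i j. mpauli (\<nu> i) (a i) (b i) \<circ> mpauli (\<nu> j) (a j) (b j)
                    = mpauli (\<nu> j) (a j) (b j) \<circ> mpauli (\<nu> i) (a i) (b i)"
    and out0: "\<forall>j. \<mu>0 j \<in> {1, -1}"
    and out1: "\<forall>j. \<mu>1 j \<in> {1, -1}"
  shows "\<exists>\<Phi> :: ('q \<Rightarrow> complex) \<Rightarrow> ('q \<Rightarrow> complex) \<Rightarrow> 'q astate.
           (\<forall>\<mu>X \<mu>Z. (\<forall>j. \<mu>X j \<in> {1, -1} \<and> \<mu>Z j \<in> {1, -1}) \<longrightarrow>
              Psi_f a b \<mu>X \<mu>Z \<mu>0 \<mu>1 \<psi> =
              tens (oprod (\<lambda>j. proj ((- \<i>) ^ char_num (a j) (b j) * \<nu> j * \<mu>X j * \<mu>Z j)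
                                     (mpauli (\<nu> j) (a j) (b j))) \<psi>)
                   (\<Phi> \<mu>X \<mu>Z))
         \<and> (\<forall>\<mu>X \<mu>Z \<mu>X' \<mu>Z'. (\<forall>j. \<mu>X j \<in> {1, -1} \<and> \<mu>Z j \<in> {1, -1}
                                \<and> \<mu>X' j \<in> {1, -1} \<and> \<mu>Z' j \<in> {1, -1}) \<longrightarrow>
              anorm (\<Phi> \<mu>X \<mu>Z) = anorm (\<Phi> \<mu>X' \<mu>Z'))"
proof -
  define \<Phi> :: "('q \<Rightarrow> complex) \<Rightarrow> ('q \<Rightarrow> complex) \<Rightarrow> 'q astate" where
    "\<Phi> = (\<lambda>\<mu>X \<mu>Z s. \<Prod>k\<in>UNIV. phi (char_num (a k) (b k)) (\<mu>Z k) (\<mu>0 k) (\<mu>1 k) (s (False,k)) (s (True,k)))"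
  have part1: "\<forall>\<mu>X \<mu>Z. (\<forall>j. \<mu>X j \<in> {1, -1} \<and> \<mu>Z j \<in> {1, -1}) \<longrightarrow>
              Psi_f a b \<mu>X \<mu>Z \<mu>0 \<mu>1 \<psi> =
              tens (oprod (\<lambda>j. proj ((- \<i>) ^ char_num (a j) (b j) * \<nu> j * \<mu>X j * \<mu>Z j)
                                     (mpauli (\<nu> j) (a j) (b j))) \<psi>)
                   (\<Phi> \<mu>X \<mu>Z)"
  proof (intro allI impI)
    fix \<mu>X \<mu>Z :: "'q \<Rightarrow> complex"
    assume H: "\<forall>j. \<mu>X j \<in> {1, -1} \<and> \<mu>Z j \<in> {1, -1}"
    have "Psi_f a b \<mu>X \<mu>Z \<mu>0 \<mu>1 \<psi> =
      oprod (\<lambda>j. Gop (a j) (b j) (char_num (a j) (b j)) (\<mu>X j) (\<mu>Z j) (\<mu>0 j) (\<mu>1 j) j) (tens \<psi> anc_init)"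
      by (rule psi_f_merge[OF reg])
    also have "\<dots> = (\<lambda>(x,s). foldr (\<lambda>j A. proj ((- \<i>) ^ char_num (a j) (b j) * \<nu> j * \<mu>X j * \<mu>Z j) (mpauli (\<nu> j) (a j) (b j)) \<circ> A) Enum.enum id \<psi> x
        * (\<Prod>k\<in>UNIV. if k \<in> set Enum.enum then phi (char_num (a k) (b k)) (\<mu>Z k) (\<mu>0 k) (\<mu>1 k) (s (False,k)) (s (True,k))
                      else ini (s (True,k))))"
      unfolding oprod_def
      by (rule induct_main[where \<nu>=\<nu>]) (use herm H out0 out1 enum_distinct in auto)
    also have "\<dots> = tens (oprod (\<lambda>j. proj ((- \<i>) ^ char_num (a j) (b j) * \<nu> j * \<mu>X j * \<mu>Z j)
                                     (mpauli (\<nu> j) (a j) (b j))) \<psi>) (\<Phi> \<mu>X \<mu>Z)"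
      by (simp add: fun_eq_iff tens_def oprod_def \<Phi>_def UNIV_enum[symmetric])
    finally show "Psi_f a b \<mu>X \<mu>Z \<mu>0 \<mu>1 \<psi> =
              tens (oprod (\<lambda>j. proj ((- \<i>) ^ char_num (a j) (b j) * \<nu> j * \<mu>X j * \<mu>Z j)
                                     (mpauli (\<nu> j) (a j) (b j))) \<psi>) (\<Phi> \<mu>X \<mu>Z)" .
  qed
  have part2: "\<forall>\<mu>X \<mu>Z \<mu>X' \<mu>Z'. (\<forall>j. \<mu>X j \<in> {1, -1} \<and> \<mu>Z j \<in> {1, -1}
                                \<and> \<mu>X' j \<in> {1, -1} \<and> \<mu>Z' j \<in> {1, -1}) \<longrightarrow>
              anorm (\<Phi> \<mu>X \<mu>Z) = anorm (\<Phi> \<mu>X' \<mu>Z')"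
  proof (intro allI impI)
    fix \<mu>X \<mu>Z \<mu>X' \<mu>Z' :: "'q \<Rightarrow> complex"
    assume H: "\<forall>j. \<mu>X j \<in> {1, -1} \<and> \<mu>Z j \<in> {1, -1} \<and> \<mu>X' j \<in> {1, -1} \<and> \<mu>Z' j \<in> {1, -1}"
    have "\<And>s. cmod (\<Phi> \<mu>X \<mu>Z s) = cmod (\<Phi> \<mu>X' \<mu>Z' s)"
    proof -
      fix s
      have "cmod (\<Phi> \<mu>X \<mu>Z s) = (\<Prod>k\<in>UNIV. cmod (phi (char_num (a k) (b k)) (\<mu>Z k) (\<mu>0 k) (\<mu>1 k) (s (False,k)) (s (True,k))))"
        unfolding \<Phi>_def by (simp add: prod_norm)
      also have "\<dots> = (\<Prod>k\<in>UNIV. cmod (phi (char_num (a k) (b k)) (\<mu>Z' k) (\<mu>0 k) (\<mu>1 k) (s (False,k)) (s (True,k))))"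
        by (rule prod.cong[OF refl], rule phi_norm) (use H in auto)
      also have "\<dots> = cmod (\<Phi> \<mu>X' \<mu>Z' s)"
        unfolding \<Phi>_def by (simp add: prod_norm)
      finally show "cmod (\<Phi> \<mu>X \<mu>Z s) = cmod (\<Phi> \<mu>X' \<mu>Z' s)" .
    qed
    then show "anorm (\<Phi> \<mu>X \<mu>Z) = anorm (\<Phi> \<mu>X' \<mu>Z')"
      unfolding anorm_def by simp
  qed
  show ?thesis using part1 part2 by blast
qed

end
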